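(* Let $X$ and $Y$ be continuous random variables with marginal distribution functions $F_1,F_2$ and copula $C$, and suppose $Y=f(X)$ almost surely, where $f$ is a periodic function, continuous and differentiable over the range of $X$. Let $M(u,v)=\min(u,v)$, $W(u,v)=\max(u+v-1,0)$, $\Pi(u,v)=uv$. Then at every global maximum point $(x_1,y_{\max})$ of $f$, with $u_1=F_1(x_1)$, $v_1=F_2(y_{\max})$, one has $C(u_1,v_1)=M(u_1,v_1)=W(u_1,v_1)=\Pi(u_1,v_1)=u_1$, and at every global minimum point $(x_2,y_{\min})$ of $f$, with $u_2=F_1(x_2)$, $v_2=F_2(y_{\min})$, one has $C(u_2,v_2)=M(u_2,v_2)=W(u_2,v_2)=\Pi(u_2,v_2)=0$.
   Context: The copula $C$ of continuous random variables $X,Y$ with joint distribution $H$ and marginals $F_1,F_2$ is the unique function $C:[0,1]^2\to[0,1]$ with $H(x,y)=P(X\le x,Y\le y)=C(F_1(x),F_2(y))$. *)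

theory Defs
  imports "HOL-Probability.Probability"
begin

definition copula :: "(real \<Rightarrow> real \<Rightarrow> real) \<Rightarrow> bool" where
  "copula C \<longleftrightarrow>
     (\<forall>u\<in>{0..1}. \<forall>v\<in>{0..1}. C u v \<in> {0..1}) \<and>
     (\<forall>u\<in>{0..1}. C u 0 = 0 \<and> C 0 u = 0 \<and> C u 1 = u \<and> C 1 u = u) \<and>
     (\<forall>u1\<in>{0..1}. \<forall>u2\<in>{0..1}. \<forall>v1\<in>{0..1}. \<forall>v2\<in>{0..1}.
        u1 \<le> u2 \<longrightarrow> v1 \<le> v2 \<longrightarrow> C u2 v2 - C u2 v1 - C u1 v2 + C u1 v1 \<ge> 0)"

definition copula_of :: "'a measure \<Rightarrow> ('a \<Rightarrow> real) \<Rightarrow> ('a \<Rightarrow> real) \<Rightarrow> (real \<Rightarrow> real \<Rightarrow> real) \<Rightarrow> bool" where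
  "copula_of M X Y C \<longleftrightarrow> copula C \<and>
     (\<forall>x y. measure M {\<omega> \<in> space M. X \<omega> \<le> x \<and> Y \<omega> \<le> y}
            = C (measure M {\<omega> \<in> space M. X \<omega> \<le> x}) (measure M {\<omega> \<in> space M. Y \<omega> \<le> y}))"

definition cop_M :: "real \<Rightarrow> real \<Rightarrow> real" where "cop_M u v = min u v"
definition cop_W :: "real \<Rightarrow> real \<Rightarrow> real" where "cop_W u v = max (u + v - 1) 0"
definition cop_Pi :: "real \<Rightarrow> real \<Rightarrow> real" where "cop_Pi u v = u * v"

end

theory Submission
  imports Defs
begin

theorem corollary1:
  fixes M :: "'a measure" and X Y :: "'a \<Rightarrow> real" and f :: "real \<Rightarrow> real"
    and C :: "real \<Rightarrow> real \<Rightarrow> real" and F1 F2 :: "real \<Rightarrow> real"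
  assumes "prob_space M"
    and "X \<in> borel_measurable M" and "Y \<in> borel_measurable M"
    and F1_def: "\<And>x. F1 x = measure M {\<omega> \<in> space M. X \<omega> \<le> x}"
    and F2_def: "\<And>y. F2 y = measure M {\<omega> \<in> space M. Y \<omega> \<le> y}"
    and "\<And>x. isCont F1 x" and "\<And>y. isCont F2 y"
    and "copula_of M X Y C"
    and "\<exists>p>0. \<forall>x. f (x + p) = f x"
    and "continuous_on (X ` space M) f" and "f differentiable_on (X ` space M)"
    and "AE \<omega> in M. Y \<omega> = f (X \<omega>)"
  shows "(\<forall>x1. (\<forall>x. f x \<le> f x1) \<longrightarrow>
            (let u1 = F1 x1; v1 = F2 (f x1) in
               C u1 v1 = cop_M u1 v1 \<and> cop_M u1 v1 = cop_W u1 v1 \<and>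
               cop_W u1 v1 = cop_Pi u1 v1 \<and> cop_Pi u1 v1 = u1)) \<and>
         (\<forall>x2. (\<forall>x. f x2 \<le> f x) \<longrightarrow>
            (let u2 = F1 x2; v2 = F2 (f x2) in
               C u2 v2 = cop_M u2 v2 \<and> cop_M u2 v2 = cop_W u2 v2 \<and>
               cop_W u2 v2 = cop_Pi u2 v2 \<and> cop_Pi u2 v2 = 0))"
proof -
  interpret P: prob_space M by fact
  have cop: "copula C" using assms(8) unfolding copula_of_def by blast
  have meas: "\<And>c. {\<omega> \<in> space M. Y \<omega> \<le> c} \<in> sets M"
    using assms(3) by measurable
  have u01: "\<And>x. F1 x \<in> {0..1}" unfolding F1_def by (simp add: P.prob_le_1)
  show ?thesis
  proof (intro conjI allI impI)
    fix x1 assume mx: "\<forall>x. f x \<le> f x1"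
    have "AE \<omega> in M. Y \<omega> \<le> f x1" using assms(12) by eventually_elim (use mx in auto)
    hence v1: "F2 (f x1) = 1" unfolding F2_def using P.prob_Collect_eq_1[OF meas[of "f x1"]] by simp
    show "let u1 = F1 x1; v1 = F2 (f x1) in
               C u1 v1 = cop_M u1 v1 \<and> cop_M u1 v1 = cop_W u1 v1 \<and>
               cop_W u1 v1 = cop_Pi u1 v1 \<and> cop_Pi u1 v1 = u1"
      using u01[of x1] cop unfolding v1 Let_def copula_def cop_M_def cop_W_def cop_Pi_def
      by auto
  next
    fix x2 assume mn: "\<forall>x. f x2 \<le> f x"
    define c where "c = f x2"
    have z: "F2 t = 0" if "t < c" for t
    proof -
      have "AE \<omega> in M. \<not> Y \<omega> \<le> t" using assms(12)
        by eventually_elim (metis mn that c_def not_le order.strict_trans1)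
      thus ?thesis unfolding F2_def using P.prob_Collect_eq_0[OF meas[of t]] by simp
    qed
    have "(F2 \<longlongrightarrow> F2 c) (at_left c)"
      using assms(7)[of c] by (simp add: isCont_def filterlim_at_split)
    moreover have "(F2 \<longlongrightarrow> 0) (at_left c)"
    proof (rule Lim_transform_eventually[OF tendsto_const])
      show "\<forall>\<^sub>F t in at_left c. 0 = F2 t"
        unfolding eventually_at_filter by (intro always_eventually) (simp add: z)
    qed
    ultimately have v2: "F2 (f x2) = 0" unfolding c_def[symmetric]
      using tendsto_unique trivial_limit_at_left_real by blast
    show "let u2 = F1 x2; v2 = F2 (f x2) in
               C u2 v2 = cop_M u2 v2 \<and> cop_M u2 v2 = cop_W u2 v2 \<and>
               cop_W u2 v2 = cop_Pi u2 v2 \<and> cop_Pi u2 v2 = 0"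
      using u01[of x2] cop unfolding v2 Let_def copula_def cop_M_def cop_W_def cop_Pi_def
      by auto
  qed
qed

end
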